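(* Let $\lambda>0$ and $\theta\in(0,1]$ with $\lambda\theta\in(0,1]$, and let $(X_t)_{t\ge0}$ be the free Jacobi process with parameters $(\lambda,\theta)$. For each $t\ge 0$ let $\mathcal{S}_t^{(\lambda,\theta)}$ be its $S$ transform (defined below). Then, locally around the origin $z=0$, $$\partial_t \mathcal{S}_t^{(\lambda,\theta)}(z)=(2\lambda\theta z+1)\,\mathcal{S}_t^{(\lambda,\theta)}(z)-\theta(1+2\lambda z)\big[\mathcal{S}_t^{(\lambda,\theta)}(z)\big]^2-\frac{\theta z(1+\lambda z)}{2}\,\partial_z\Big(\big[\mathcal{S}_t^{(\lambda,\theta)}\big]^2\Big)(z).$$
   Context: Free Jacobi process: in a tracial $W^*$-probability space $(\mathcal A,\tau)$, let $P,Q$ be orthogonal projections with $\tau(P)=\lambda\theta$, $\tau(Q)=\theta$, and let $(Y_t)_{t\ge0}$ be a free unitary Brownian motion, with $P,Q,(Y_t)$ free. Set $X_t=PY_tQY_t^*P$, viewed as an element of the compressed space $(P\mathcal AP,\tau/\tau(P))$. Its moments are $m_n(t)=\tau(X_t^n)/\tau(P)$, and its moment generating function is $\mathcal M_t^{(\lambda,\theta)}(z)=\sum_{n\ge0}m_n(t)z^n$. It is known that $\mathcal M_t^{(\lambda,\theta)}$ satisfies $$\partial_t\mathcal M_t^{(\lambda,\theta)}=-z\,\partial_z\Big\{[(1-2\lambda\theta)-\theta(1-\lambda)z]\mathcal M_t^{(\lambda,\theta)}+\lambda\theta(1-z)[\mathcal M_t^{(\lambda,\theta)}]^2\Big\}.$$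 Let $\psi_t^{(\lambda,\theta)}=\mathcal M_t^{(\lambda,\theta)}-1$; since $m_1(t)\neq0$, $\psi_t$ has a local inverse $\eta_t^{(\lambda,\theta)}$ near $0$. The $S$ transform is $\mathcal S_t^{(\lambda,\theta)}(z)=\frac{1+z}{z}\eta_t^{(\lambda,\theta)}(z)$, extended analytically to $z=0$. *)

theory Defs
  imports "HOL-Complex_Analysis.Complex_Analysis"
begin

definition mgf :: "(nat \<Rightarrow> real \<Rightarrow> real) \<Rightarrow> real \<Rightarrow> complex \<Rightarrow> complex" where
  "mgf m t z = (\<Sum>n. complex_of_real (m n t) * z ^ n)"

text \<open>Right-hand side of the known evolution equation of the moment generating function
  of the free Jacobi process with parameters (lam, th):
  -z d/dz { [(1 - 2 lam th) - th (1 - lam) z] M + lam th (1 - z) M^2 }.\<close>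
definition jacobi_mgf_rhs :: "real \<Rightarrow> real \<Rightarrow> (complex \<Rightarrow> complex) \<Rightarrow> complex \<Rightarrow> complex" where
  "jacobi_mgf_rhs lam th M z =
     - z * deriv (\<lambda>w. (complex_of_real (1 - 2*lam*th) - complex_of_real (th*(1-lam)) * w) * M w
                     + complex_of_real (lam*th) * (1 - w) * (M w)^2) z"

text \<open>S is (on the time-window T and the disc ball 0 r) the S transform of the family M:
  for each t in T, S t is holomorphic near 0 and  eta_t(z) = z S_t(z)/(1+z)  is an inverse
  of psi_t = M_t - 1, i.e. psi_t(eta_t(z)) = z.  (This determines S t uniquely on ball 0 r:
  eta_t is then the analytic local inverse of psi_t at 0, and S t 0 is the analytic extension.)\<close>
definition is_S_transform_on ::
  "(real \<Rightarrow> complex \<Rightarrow> complex) \<Rightarrow> real set \<Rightarrow> real \<Rightarrow> (real \<Rightarrow> complex \<Rightarrow> complex) \<Rightarrow> bool" where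
  "is_S_transform_on M T r S \<longleftrightarrow>
     (\<forall>t\<in>T. S t holomorphic_on ball 0 r \<and>
        (\<forall>z\<in>ball 0 r. M t (z * S t z / (1 + z)) - 1 = z))"

end

theory Submission
  imports Defs
begin
lemma vd_bound:
  fixes f :: "real \<Rightarrow> 'b::real_normed_vector"
  assumes "convex S" "\<And>x. x\<in>S \<Longrightarrow> (f has_vector_derivative f' x) (at x within S)"
    "\<And>x. x\<in>S \<Longrightarrow> norm (f' x) \<le> B" "x\<in>S" "y\<in>S"
  shows "norm (f x - f y) \<le> B * \<bar>x - y\<bar>"
proof -
  have "norm (f x - f y) \<le> B * norm (x - y)"
  proof (rule differentiable_bound[where f'="\<lambda>x h. h *\<^sub>R f' x"])
    show "convex S" by fact
    show "(f has_derivative (\<lambda>h. h *\<^sub>R f' z)) (at z within S)" if "z \<in> S" for z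
      using assms(2)[OF that] by (simp add: has_vector_derivative_def)
    show "onorm (\<lambda>h. h *\<^sub>R f' z) \<le> B" if "z \<in> S" for z
      using onorm_scaleR_left[of "\<lambda>x. x" "f' z"] assms(3)[OF that]
      by (simp add: onorm_id bounded_linear_ident)
  qed (use assms in auto)
  then show ?thesis by simp
qed

lemma ps_summable:
  fixes c :: "nat \<Rightarrow> complex"
  assumes "\<And>n. norm (c n) \<le> 1" "norm z < 1"
  shows "summable (\<lambda>n. norm (c n * z^n))" "summable (\<lambda>n. c n * z^n)"
proof -
  have "summable (\<lambda>n. norm z ^ n)" using assms(2) by (simp add: summable_geometric)
  moreover have "norm (norm (c n * z^n)) \<le> norm z ^ n" for n
    using assms(1)[of n] by (simp add: norm_mult norm_power mult_left_le_one_le)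
  ultimately show "summable (\<lambda>n. norm (c n * z^n))"
    using summable_comparison_test'[where N=0 and g="\<lambda>n. norm z ^ n" and f="\<lambda>n. norm (c n * z^n)"] by blast
  then show "summable (\<lambda>n. c n * z^n)" by (rule summable_norm_cancel)
qed

lemma ps_bound:
  fixes c :: "nat \<Rightarrow> complex"
  assumes "\<And>n. norm (c n) \<le> 1" "norm z < 1"
  shows "norm (\<Sum>n. c n * z^n) \<le> 1 / (1 - norm z)"
proof -
  have "norm (\<Sum>n. c n * z^n) \<le> (\<Sum>n. norm (c n * z^n))"
    using ps_summable(1)[of c z, OF assms] by (rule summable_norm)
  also have "\<dots> \<le> (\<Sum>n. norm z ^ n)"
    apply (rule suminf_le)
    using assms ps_summable[of c z, OF assms] by (auto simp: norm_mult norm_power mult_left_le_one_le summable_geometric)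
  also have "\<dots> = 1 / (1 - norm z)" using assms(2) by (simp add: suminf_geometric)
  finally show ?thesis .
qed

lemma ps_deriv:
  fixes c :: "nat \<Rightarrow> complex"
  assumes "\<And>n. norm (c n) \<le> 1" "norm z < 1"
  shows "((\<lambda>z. \<Sum>n. c n * z^n) has_field_derivative (\<Sum>n. diffs c n * z^n)) (at z)"
  by (rule termdiffs_strong'[where K=1]) (use ps_summable[of c, OF assms(1)] assms(2) in auto)

lemma ps_holo:
  fixes c :: "nat \<Rightarrow> complex"
  assumes "\<And>n. norm (c n) \<le> 1"
  shows "(\<lambda>z. \<Sum>n. c n * z^n) holomorphic_on ball 0 1"
  unfolding holomorphic_on_def field_differentiable_def
  using ps_deriv[of c, OF assms] has_field_derivative_at_within by fastforce

lemma ps_deriv0: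
  fixes c :: "nat \<Rightarrow> complex"
  assumes "\<And>n. norm (c n) \<le> 1"
  shows "deriv (\<lambda>z. \<Sum>n. c n * z^n) 0 = c 1"
proof -
  have "deriv (\<lambda>z. \<Sum>n. c n * z^n) 0 = (\<Sum>n. diffs c n * 0^n)"
    by (rule DERIV_imp_deriv, rule ps_deriv[of c, OF assms]) simp
  also have "\<dots> = c 1" by (simp add: powser_zero diffs_def)
  finally show ?thesis .
qed

lemma ps_0:
  fixes c :: "nat \<Rightarrow> complex"
  shows "(\<Sum>n. c n * 0^n) = c 0" by (simp add: powser_zero)

lemma cauchy_dn:
  assumes H: "H holomorphic_on ball 0 1" and r: "0 \<le> r" "r < r'" "r' < 1"
    and bd: "\<And>w. norm w \<le> r' \<Longrightarrow> norm (H w) \<le> B" and w: "norm w \<le> r"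
  shows "norm ((deriv ^^ n) H w) \<le> fact n * B / (r' - r)^n"
proof (rule Cauchy_inequality)
  have sub: "cball w (r' - r) \<subseteq> ball 0 1"
  proof
    fix x assume "x \<in> cball w (r' - r)"
    then have "norm (x - w) \<le> r' - r" by (simp add: dist_norm norm_minus_commute)
    then have "norm x \<le> r'" using w norm_triangle_ineq2[of x w] by linarith
    then show "x \<in> ball 0 1" using r by simp
  qed
  show "H holomorphic_on ball w (r' - r)"
    using H sub ball_subset_cball by (blast intro: holomorphic_on_subset)
  show "continuous_on (cball w (r' - r)) H"
    using holomorphic_on_imp_continuous_on[OF H] sub by (blast intro: continuous_on_subset)
  show "0 < r' - r" using r by simp
  show "norm (H x) \<le> B" if "norm (w - x) = r' - r" for x
  proof -
    have "norm x \<le> r'" using that w norm_triangle_ineq2[of x w] by (simp add: norm_minus_commute)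
    then show ?thesis by (rule bd)
  qed
qed

lemma cauchy_d1:
  assumes H: "H holomorphic_on ball 0 1" and r: "0 \<le> r" "r < r'" "r' < 1"
    and bd: "\<And>w. norm w \<le> r' \<Longrightarrow> norm (H w) \<le> B" and w: "norm w \<le> r"
  shows "norm (deriv H w) \<le> B / (r' - r)"
  using cauchy_dn[OF assms, of 1] by simp

lemma cauchy_d2:
  assumes H: "H holomorphic_on ball 0 1" and r: "0 \<le> r" "r < r'" "r' < 1"
    and bd: "\<And>w. norm w \<le> r' \<Longrightarrow> norm (H w) \<le> B" and w: "norm w \<le> r"
  shows "norm (deriv (deriv H) w) \<le> 2 * B / (r' - r)^2"
  using cauchy_dn[OF assms, of 2] by (simp add: numeral_2_eq_2)

lemma vd_from_bound:
  fixes f :: "real \<Rightarrow> 'a::real_normed_vector"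
  assumes ev: "eventually (\<lambda>s. norm (f s - f t - (s - t) *\<^sub>R D) \<le> \<bar>s - t\<bar> * \<phi> s) (at t within S)"
    and lim: "(\<phi> \<longlongrightarrow> 0) (at t within S)"
  shows "(f has_vector_derivative D) (at t within S)"
  unfolding has_vector_derivative_def has_derivative_within_alt2
proof (intro conjI allI impI)
  show "bounded_linear (\<lambda>h. h *\<^sub>R D)" by (rule bounded_linear_scaleR_left)
  fix e :: real assume e: "e > 0"
  have "eventually (\<lambda>s. \<phi> s < e) (at t within S)" using order_tendstoD(2)[OF lim e] .
  with ev show "eventually (\<lambda>s. norm (f s - f t - (s - t) *\<^sub>R D) \<le> e * norm (s - t)) (at t within S)"
  proof eventually_elim
    case (elim s)
    have "\<bar>s - t\<bar> * \<phi> s \<le> \<bar>s - t\<bar> * e" using elim(2) by (intro mult_left_mono) auto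
    then show ?case using elim(1) by (simp add: mult.commute)
  qed
qed

locale fj =
  fixes lam th :: real and m :: "nat \<Rightarrow> real \<Rightarrow> real"
  assumes m0: "\<forall>t\<ge>0. m 0 t = 1"
    and m_bound: "\<forall>n. \<forall>t\<ge>0. \<bar>m n t\<bar> \<le> 1"
    and pde: "\<forall>t\<ge>0. \<forall>z\<in>ball 0 1.
               ((\<lambda>s. mgf m s z) has_vector_derivative jacobi_mgf_rhs lam th (mgf m t) z)
                 (at t within {0..})"
begin

definition G :: "real \<Rightarrow> complex \<Rightarrow> complex" where
  "G t = (\<lambda>w. (complex_of_real (1 - 2*lam*th) - complex_of_real (th*(1-lam)) * w) * mgf m t w
                     + complex_of_real (lam*th) * (1 - w) * (mgf m t w)^2)"

definition F :: "real \<Rightarrow> complex \<Rightarrow> complex" where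
  "F t w = jacobi_mgf_rhs lam th (mgf m t) w"

lemma F_eq: "F t w = - w * deriv (G t) w"
  unfolding F_def jacobi_mgf_rhs_def G_def ..

lemma cb: "t \<ge> 0 \<Longrightarrow> norm (complex_of_real (m n t)) \<le> 1"
  using m_bound by simp

lemma M_eq: "mgf m t = (\<lambda>z. \<Sum>n. complex_of_real (m n t) * z^n)"
  unfolding mgf_def by (rule ext) simp

lemma M_holo: "t \<ge> 0 \<Longrightarrow> mgf m t holomorphic_on ball 0 1"
  unfolding M_eq by (rule ps_holo) (rule cb)

lemma M_bd: "t \<ge> 0 \<Longrightarrow> norm z < 1 \<Longrightarrow> norm (mgf m t z) \<le> 1 / (1 - norm z)"
  unfolding M_eq by (rule ps_bound) (use m_bound in auto)

lemma M_0: "t \<ge> 0 \<Longrightarrow> mgf m t 0 = 1"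
  unfolding M_eq using m0 by (simp add: powser_zero)

lemma M_d0: "t \<ge> 0 \<Longrightarrow> deriv (mgf m t) 0 = of_real (m 1 t)"
  unfolding M_eq by (rule ps_deriv0) (rule cb)

lemma M_deriv: "t \<ge> 0 \<Longrightarrow> norm w < 1 \<Longrightarrow> (mgf m t has_field_derivative deriv (mgf m t) w) (at w)"
  using M_holo holomorphic_derivI[of "mgf m t" "ball 0 1" w] by simp

lemma G_holo: "t \<ge> 0 \<Longrightarrow> G t holomorphic_on ball 0 1"
  unfolding G_def by (intro holomorphic_intros M_holo)

lemma F_holo: "t \<ge> 0 \<Longrightarrow> F t holomorphic_on ball 0 1"
  unfolding F_eq[abs_def] by (intro holomorphic_intros holomorphic_deriv G_holo) auto

lemma G_bd:
  assumes "r < 1"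
  shows "\<exists>C. \<forall>t\<ge>0. \<forall>w. norm w \<le> r \<longrightarrow> norm (G t w) \<le> C"
proof -
  define a where "a = \<bar>1 - 2*lam*th\<bar> + \<bar>th*(1-lam)\<bar>"
  define b where "b = 2 * \<bar>lam*th\<bar>"
  define q where "q = 1 / (1 - r)"
  have "norm (G t w) \<le> a * q + b * q^2" if t: "t \<ge> 0" and w: "norm w \<le> r" for t w
  proof -
    have w1: "norm w < 1" using w assms by simp
    have Mq: "norm (mgf m t w) \<le> q"
    proof -
      have "norm (mgf m t w) \<le> 1 / (1 - norm w)" by (rule M_bd[OF t w1])
      also have "\<dots> \<le> q" unfolding q_def using w assms w1
        by (intro divide_left_mono) auto
      finally show ?thesis .
    qed
    have A: "norm (complex_of_real (1 - 2*lam*th) - complex_of_real (th*(1-lam)) * w) \<le> a"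
    proof -
      have "norm (complex_of_real (1 - 2*lam*th) - complex_of_real (th*(1-lam)) * w)
          \<le> norm (complex_of_real (1 - 2*lam*th)) + norm (complex_of_real (th*(1-lam)) * w)"
        by (rule norm_triangle_ineq4)
      also have "\<dots> = \<bar>1 - 2*lam*th\<bar> + \<bar>th*(1-lam)\<bar> * norm w"
        by (simp only: norm_mult norm_of_real)
      also have "\<dots> \<le> \<bar>1 - 2*lam*th\<bar> + \<bar>th*(1-lam)\<bar> * 1"
        using w1 by (intro add_left_mono mult_left_mono) auto
      finally show ?thesis unfolding a_def by simp
    qed
    have B: "norm (complex_of_real (lam*th) * (1 - w)) \<le> b"
    proof -
      have "norm (1 - w) \<le> 2" using norm_triangle_ineq4[of 1 w] w1 by simp
      then have "\<bar>lam*th\<bar> * norm (1 - w) \<le> \<bar>lam*th\<bar> * 2" by (intro mult_left_mono) auto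
      then show ?thesis unfolding b_def by (simp only: norm_mult norm_of_real)
    qed
    have "norm (G t w) \<le> norm ((complex_of_real (1 - 2*lam*th) - complex_of_real (th*(1-lam)) * w) * mgf m t w)
        + norm (complex_of_real (lam*th) * (1 - w) * (mgf m t w)^2)"
      unfolding G_def by (rule norm_triangle_ineq)
    also have "\<dots> \<le> a * q + b * q^2"
    proof (rule add_mono)
      let ?X = "complex_of_real (1 - 2*lam*th) - complex_of_real (th*(1-lam)) * w"
      let ?Y = "complex_of_real (lam*th) * (1 - w)"
      have "norm (?X * mgf m t w) = norm ?X * norm (mgf m t w)" by (rule norm_mult)
      also have "\<dots> \<le> a * q" using A Mq by (intro mult_mono) (auto simp: a_def)
      finally show "norm (?X * mgf m t w) \<le> a * q" .
      have "norm (?Y * (mgf m t w)^2) = norm ?Y * norm (mgf m t w)^2" by (simp add: norm_mult norm_power)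
      also have "\<dots> \<le> b * q^2" using B Mq by (intro mult_mono power_mono) (auto simp: b_def)
      finally show "norm (?Y * (mgf m t w)^2) \<le> b * q^2" .
    qed
    finally show ?thesis .
  qed
  then show ?thesis by blast
qed

end

context fj begin

definition "Ac = \<bar>1 - 2*lam*th\<bar> + \<bar>th*(1-lam)\<bar>"
definition "Bc = 2 * \<bar>lam*th\<bar>"

lemma A_bd: "norm w < 1 \<Longrightarrow> norm (complex_of_real (1 - 2*lam*th) - complex_of_real (th*(1-lam)) * w) \<le> Ac"
proof -
  assume w1: "norm w < 1"
  have "norm (complex_of_real (1 - 2*lam*th) - complex_of_real (th*(1-lam)) * w)
      \<le> norm (complex_of_real (1 - 2*lam*th)) + norm (complex_of_real (th*(1-lam)) * w)"
    by (rule norm_triangle_ineq4)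
  also have "\<dots> = \<bar>1 - 2*lam*th\<bar> + \<bar>th*(1-lam)\<bar> * norm w"
    by (simp only: norm_mult norm_of_real)
  also have "\<dots> \<le> \<bar>1 - 2*lam*th\<bar> + \<bar>th*(1-lam)\<bar> * 1"
    using w1 by (intro add_left_mono mult_left_mono) auto
  finally show ?thesis unfolding Ac_def by simp
qed

lemma B_bd: "norm w < 1 \<Longrightarrow> norm (complex_of_real (lam*th) * (1 - w)) \<le> Bc"
proof -
  assume w1: "norm w < 1"
  have "norm (1 - w) \<le> 2" using norm_triangle_ineq4[of 1 w] w1 by simp
  then have "\<bar>lam*th\<bar> * norm (1 - w) \<le> \<bar>lam*th\<bar> * 2" by (intro mult_left_mono) auto
  then show ?thesis unfolding Bc_def by (simp only: norm_mult norm_of_real)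
qed

lemma Ac_nn: "Ac \<ge> 0" and Bc_nn: "Bc \<ge> 0" by (auto simp: Ac_def Bc_def)

lemma F_bd:
  assumes "0 \<le> r" "r < 1"
  shows "\<exists>K. \<forall>t\<ge>0. \<forall>w. norm w \<le> r \<longrightarrow> norm (F t w) \<le> K"
proof -
  define r' where "r' = (1 + r) / 2"
  have r': "r < r'" "r' < 1" using assms by (auto simp: r'_def)
  obtain C where C: "\<And>t w. t \<ge> 0 \<Longrightarrow> norm w \<le> r' \<Longrightarrow> norm (G t w) \<le> C"
    using G_bd[OF r'(2)] by blast
  have "norm (F t w) \<le> C / (r' - r)" if t: "t \<ge> 0" and w: "norm w \<le> r" for t w
  proof -
    have d: "norm (deriv (G t) w) \<le> C / (r' - r)"
      by (rule cauchy_d1[OF G_holo[OF t] assms(1) r' C[OF t] w])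
    have "norm (F t w) = norm w * norm (deriv (G t) w)" by (simp add: F_eq norm_mult)
    also have "\<dots> \<le> 1 * norm (deriv (G t) w)" using w assms by (intro mult_right_mono) auto
    finally show ?thesis using d by simp
  qed
  then show ?thesis by blast
qed

lemma pde': "t \<ge> 0 \<Longrightarrow> norm z < 1 \<Longrightarrow> ((\<lambda>s. mgf m s z) has_vector_derivative F t z) (at t within {0..})"
  using pde by (simp add: F_def)

lemma M_lip:
  assumes "0 \<le> r" "r < 1"
  shows "\<exists>K. \<forall>t\<ge>0. \<forall>s\<ge>0. \<forall>w. norm w \<le> r \<longrightarrow> norm (mgf m s w - mgf m t w) \<le> K * \<bar>s - t\<bar>"
proof -
  obtain K where K: "\<And>t w. t \<ge> 0 \<Longrightarrow> norm w \<le> r \<Longrightarrow> norm (F t w) \<le> K"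
    using F_bd[OF assms] by blast
  have "norm (mgf m s w - mgf m t w) \<le> K * \<bar>s - t\<bar>" if "t \<ge> 0" "s \<ge> 0" "norm w \<le> r" for s t w
  proof (rule vd_bound[where S="{min s t..max s t}" and f'="\<lambda>u. F u w"])
    show "((\<lambda>u. mgf m u w) has_vector_derivative F u w) (at u within {min s t..max s t})"
      if "u \<in> {min s t..max s t}" for u
      by (rule has_vector_derivative_within_subset[OF pde'[of u w]]) (use that \<open>t\<ge>0\<close> \<open>s\<ge>0\<close> \<open>norm w \<le> r\<close> assms in auto)
    show "norm (F u w) \<le> K" if "u \<in> {min s t..max s t}" for u
      using K[of u w] that \<open>t\<ge>0\<close> \<open>s\<ge>0\<close> \<open>norm w \<le> r\<close> by auto
  qed auto
  then show ?thesis by blast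
qed

lemma G_diff: "G u w - G t w = (mgf m u w - mgf m t w) *
   ((complex_of_real (1 - 2*lam*th) - complex_of_real (th*(1-lam)) * w)
    + complex_of_real (lam*th) * (1 - w) * (mgf m u w + mgf m t w))"
  unfolding G_def by (simp add: algebra_simps power2_eq_square)

lemma F_lip:
  assumes "0 \<le> r" "r < 1"
  shows "\<exists>L. \<forall>u\<ge>0. \<forall>t\<ge>0. \<forall>w. norm w \<le> r \<longrightarrow> norm (F u w - F t w) \<le> L * \<bar>u - t\<bar>"
proof -
  define r' where "r' = (1 + r) / 2"
  have r': "r < r'" "r' < 1" "0 \<le> r'" using assms by (auto simp: r'_def)
  obtain K where K: "\<And>t s w. t \<ge> 0 \<Longrightarrow> s \<ge> 0 \<Longrightarrow> norm w \<le> r' \<Longrightarrow> norm (mgf m s w - mgf m t w) \<le> K * \<bar>s - t\<bar>"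
    using M_lip[OF r'(3) r'(2)] by blast
  define q where "q = 1 / (1 - r')"
  define E where "E = K * (Ac + Bc * (2 * q)) / (r' - r)"
  have "norm (F u w - F t w) \<le> E * \<bar>u - t\<bar>" if u: "u \<ge> 0" and t: "t \<ge> 0" and w: "norm w \<le> r" for u t w
  proof -
    define H where "H = (\<lambda>w. G u w - G t w)"
    have Hh: "H holomorphic_on ball 0 1" unfolding H_def by (intro holomorphic_intros G_holo u t)
    have Hb: "norm (H v) \<le> K * \<bar>u - t\<bar> * (Ac + Bc * (2 * q))" if v: "norm v \<le> r'" for v
    proof -
      have v1: "norm v < 1" using v r' by simp
      have Mq: "norm (mgf m s v) \<le> q" if "s \<ge> 0" for s
      proof -
        have "norm (mgf m s v) \<le> 1 / (1 - norm v)" by (rule M_bd[OF that v1])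
        also have "\<dots> \<le> q" unfolding q_def using v r' v1 by (intro divide_left_mono) auto
        finally show ?thesis .
      qed
      have "norm ((complex_of_real (1 - 2*lam*th) - complex_of_real (th*(1-lam)) * v)
          + complex_of_real (lam*th) * (1 - v) * (mgf m u v + mgf m t v)) \<le> Ac + Bc * (2 * q)"
      proof -
        have "norm (complex_of_real (lam*th) * (1 - v) * (mgf m u v + mgf m t v))
            = norm (complex_of_real (lam*th) * (1 - v)) * norm (mgf m u v + mgf m t v)" by (rule norm_mult)
        also have "\<dots> \<le> Bc * (2 * q)"
          using B_bd[OF v1] norm_triangle_ineq[of "mgf m u v" "mgf m t v"] Mq[OF u] Mq[OF t] Bc_nn
          by (intro mult_mono) auto
        finally show ?thesis using A_bd[OF v1] norm_triangle_ineq by (smt (verit))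
      qed
      moreover have "0 \<le> K * \<bar>u - t\<bar>" using K[OF t u v] norm_ge_zero order_trans by blast
      ultimately show ?thesis unfolding H_def G_diff norm_mult using K[OF t u v]
        by (intro mult_mono) auto
    qed
    have d: "norm (deriv H w) \<le> K * \<bar>u - t\<bar> * (Ac + Bc * (2 * q)) / (r' - r)"
      by (rule cauchy_d1[OF Hh assms(1) r'(1,2) Hb w])
    have w1: "norm w < 1" using w assms by simp
    have "deriv H w = deriv (G u) w - deriv (G t) w" unfolding H_def
      by (rule deriv_diff) (use holomorphic_on_imp_differentiable_at[OF G_holo[OF u], of w]
           holomorphic_on_imp_differentiable_at[OF G_holo[OF t], of w] w1 in auto)
    then have "F u w - F t w = - w * deriv H w" by (simp add: F_eq right_diff_distrib)
    then have "norm (F u w - F t w) = norm w * norm (deriv H w)" by (simp add: norm_mult)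
    also have "\<dots> \<le> 1 * norm (deriv H w)" using w assms by (intro mult_right_mono) auto
    finally show ?thesis using d by (simp add: E_def mult_ac)
  qed
  then show ?thesis by blast
qed

end

context fj begin

lemma M_second:
  assumes "0 \<le> r" "r < 1"
  shows "\<exists>L. \<forall>t\<ge>0. \<forall>s\<ge>0. \<forall>w. norm w \<le> r \<longrightarrow>
     norm (mgf m s w - mgf m t w - of_real (s - t) * F t w) \<le> L * (s - t)^2"
proof -
  obtain L0 where L0: "\<And>u t w. u \<ge> 0 \<Longrightarrow> t \<ge> 0 \<Longrightarrow> norm w \<le> r \<Longrightarrow> norm (F u w - F t w) \<le> L0 * \<bar>u - t\<bar>"
    using F_lip[OF assms] by blast
  define L where "L = max L0 0"
  have Lnn: "L \<ge> 0" by (simp add: L_def)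
  have L: "norm (F u w - F t w) \<le> L * \<bar>u - t\<bar>" if "u \<ge> 0" "t \<ge> 0" "norm w \<le> r" for u t w
  proof -
    have "L0 * \<bar>u - t\<bar> \<le> L * \<bar>u - t\<bar>" by (intro mult_right_mono) (auto simp: L_def)
    then show ?thesis using L0[OF that] by linarith
  qed
  have "norm (mgf m s w - mgf m t w - of_real (s - t) * F t w) \<le> L * (s - t)^2"
    if t: "t \<ge> 0" and s: "s \<ge> 0" and w: "norm w \<le> r" for s t w
  proof -
    have "norm ((mgf m s w - of_real (s - t) * F t w) - (mgf m t w - of_real (t - t) * F t w))
         \<le> (L * \<bar>s - t\<bar>) * \<bar>s - t\<bar>"
    proof (rule vd_bound[where S="{min s t..max s t}" and f'="\<lambda>u. F u w - F t w"
          and f="\<lambda>u. mgf m u w - of_real (u - t) * F t w"])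
      show "((\<lambda>u. mgf m u w - of_real (u - t) * F t w) has_vector_derivative F u w - F t w)
          (at u within {min s t..max s t})" if "u \<in> {min s t..max s t}" for u
      proof -
        have "((\<lambda>u. mgf m u w) has_vector_derivative F u w) (at u within {min s t..max s t})"
          by (rule has_vector_derivative_within_subset[OF pde'[of u w]]) (use that t s w assms in auto)
        moreover have "((\<lambda>u. of_real (u - t) * F t w) has_vector_derivative F t w) (at u within {min s t..max s t})"
          unfolding scaleR_conv_of_real[symmetric]
          by (rule derivative_eq_intros refl)+ simp
        ultimately show ?thesis by (rule has_vector_derivative_diff)
      qed
      show "norm (F u w - F t w) \<le> L * \<bar>s - t\<bar>" if "u \<in> {min s t..max s t}" for u
      proof -
        have "norm (F u w - F t w) \<le> L * \<bar>u - t\<bar>" using L[of u t w] that t s w by auto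
        also have "\<dots> \<le> L * \<bar>s - t\<bar>"
        proof -
          have "0 \<le> L * \<bar>u - t\<bar>" using L[of u t w] that t s w norm_ge_zero[of "F u w - F t w"] by (smt (verit) atLeastAtMost_iff min.cobounded2 order_trans)
          moreover have "\<bar>u - t\<bar> \<le> \<bar>s - t\<bar>" using that by auto
          ultimately show ?thesis
            using Lnn by (auto intro: mult_left_mono)
        qed
        finally show ?thesis .
      qed
    qed auto
    moreover have "(mgf m s w - of_real (s - t) * F t w) - (mgf m t w - of_real (t - t) * F t w)
       = mgf m s w - mgf m t w - of_real (s - t) * F t w" by simp
    ultimately have "norm (mgf m s w - mgf m t w - of_real (s - t) * F t w) \<le> (L * \<bar>s - t\<bar>) * \<bar>s - t\<bar>"
      by metis
    also have "\<dots> = L * (s - t)^2" by (simp add: power2_eq_square abs_mult_self_eq mult.assoc)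
    finally show ?thesis .
  qed
  then show ?thesis by blast
qed

definition GD :: "real \<Rightarrow> complex \<Rightarrow> complex" where
  "GD t w = (- complex_of_real (th*(1-lam))) * mgf m t w
      + (complex_of_real (1 - 2*lam*th) - complex_of_real (th*(1-lam)) * w) * deriv (mgf m t) w
      + (- complex_of_real (lam*th)) * (mgf m t w)^2
      + complex_of_real (lam*th) * (1 - w) * (2 * mgf m t w * deriv (mgf m t) w)"

lemma G_deriv: assumes "t \<ge> 0" "norm w < 1" shows "(G t has_field_derivative GD t w) (at w)"
  unfolding G_def GD_def
  apply (rule derivative_eq_intros M_deriv[OF assms] refl)+
  apply (simp add: algebra_simps power2_eq_square)
  done

end

context fj begin

lemma F_eq': "F t = (\<lambda>w. - w * deriv (G t) w)"
  by (rule ext) (rule F_eq)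

lemma F_deriv: "t \<ge> 0 \<Longrightarrow> norm w < 1 \<Longrightarrow> (F t has_field_derivative deriv (F t) w) (at w)"
  using F_holo holomorphic_derivI[of "F t" "ball 0 1" w] by simp

lemma dG_deriv: "t \<ge> 0 \<Longrightarrow> norm w < 1 \<Longrightarrow> (deriv (G t) has_field_derivative deriv (deriv (G t)) w) (at w)"
  using holomorphic_deriv[OF G_holo, of t] holomorphic_derivI[of "deriv (G t)" "ball 0 1" w] by simp

lemma F_d0: assumes t: "t \<ge> 0" shows "deriv (F t) 0 = of_real (th - m 1 t)"
proof -
  have "(F t has_field_derivative (- deriv (G t) 0)) (at 0)"
    unfolding F_eq'
    apply (rule derivative_eq_intros dG_deriv[OF t] refl)+
    apply simp
    apply simp
    done
  then have "deriv (F t) 0 = - deriv (G t) 0" by (simp add: DERIV_imp_deriv)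
  also have "deriv (G t) 0 = GD t 0" by (rule DERIV_imp_deriv[OF G_deriv[OF t]]) simp
  also have "GD t 0 = of_real (m 1 t - th)"
    unfolding GD_def M_0[OF t] M_d0[OF t] by (simp add: algebra_simps)
  finally show ?thesis by simp
qed

lemma m1_deriv:
  assumes t: "t \<ge> 0"
  shows "((\<lambda>s. complex_of_real (m 1 s)) has_vector_derivative of_real (th - m 1 t)) (at t within {0..})"
proof -
  obtain L where L: "\<And>t s w. t \<ge> 0 \<Longrightarrow> s \<ge> 0 \<Longrightarrow> norm w \<le> 1/2 \<Longrightarrow>
     norm (mgf m s w - mgf m t w - of_real (s - t) * F t w) \<le> L * (s - t)^2"
    using M_second[of "1/2"] by auto
  have bd: "norm (complex_of_real (m 1 s) - complex_of_real (m 1 t) - (s - t) *\<^sub>R of_real (th - m 1 t))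
       \<le> \<bar>s - t\<bar> * (2 * L * \<bar>s - t\<bar>)" if s: "s \<ge> 0" for s
  proof -
    define H where "H = (\<lambda>w. mgf m s w - mgf m t w - of_real (s - t) * F t w)"
    have Hh: "H holomorphic_on ball 0 1" unfolding H_def
      by (intro holomorphic_intros M_holo F_holo s t)
    have "norm (deriv H 0) \<le> L * (s - t)^2 / (1/2 - 0)"
    proof (rule cauchy_d1[OF Hh])
      show "norm (H w) \<le> L * (s - t)^2" if "norm w \<le> 1/2" for w
        unfolding H_def by (rule L[OF t s that])
    qed auto
    moreover have "(H has_field_derivative (deriv (mgf m s) 0 - deriv (mgf m t) 0 - of_real (s - t) * deriv (F t) 0)) (at 0)"
      unfolding H_def by (intro derivative_intros M_deriv DERIV_cmult F_deriv s t) auto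
    then have "deriv H 0 = deriv (mgf m s) 0 - deriv (mgf m t) 0 - of_real (s - t) * deriv (F t) 0"
      by (rule DERIV_imp_deriv)
    ultimately have "norm (complex_of_real (m 1 s) - of_real (m 1 t) - of_real (s - t) * of_real (th - m 1 t)) \<le> 2 * L * (s - t)^2"
      by (simp add: M_d0 s t F_d0 mult_ac)
    then show ?thesis by (simp add: scaleR_conv_of_real power2_eq_square abs_mult_self_eq mult_ac)
  qed
  show ?thesis
  proof (rule vd_from_bound[where \<phi>="\<lambda>s. 2 * L * \<bar>s - t\<bar>"])
    show "\<forall>\<^sub>F s in at t within {0..}. norm (complex_of_real (m 1 s) - complex_of_real (m 1 t) - (s - t) *\<^sub>R of_real (th - m 1 t))
       \<le> \<bar>s - t\<bar> * (2 * L * \<bar>s - t\<bar>)"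
      unfolding eventually_at_filter by (rule always_eventually) (use bd in auto)
    show "((\<lambda>s. 2 * L * \<bar>s - t\<bar>) \<longlongrightarrow> 0) (at t within {0..})"
      by (rule tendsto_eq_intros refl)+ simp
  qed
qed

end

locale invc =
  fixes f :: "complex \<Rightarrow> complex" and a :: complex and \<rho> \<epsilon> :: real
  assumes holo: "f holomorphic_on ball 0 1" and f0: "f 0 = 0" and df0: "deriv f 0 = a"
    and rho: "0 < \<rho>" "\<rho> < 1" and anz: "a \<noteq> 0"
    and df: "\<forall>w\<in>cball 0 \<rho>. norm (deriv f w - a) \<le> norm a / 2"
    and eps: "0 < \<epsilon>" "\<epsilon> \<le> \<rho> * norm a / 4" "\<epsilon> \<le> 1/2"
begin

definition g where "g = inv_into (ball 0 \<rho>) f"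

lemma cb_sub: "cball 0 \<rho> \<subseteq> ball 0 1" using rho by auto

lemma f_deriv: "norm w < 1 \<Longrightarrow> (f has_field_derivative deriv f w) (at w)"
  using holo holomorphic_derivI[of f "ball 0 1" w] by simp

lemma lin:
  assumes "x \<in> cball 0 \<rho>" "y \<in> cball 0 \<rho>"
  shows "norm ((f x - a * x) - (f y - a * y)) \<le> norm a / 2 * norm (x - y)"
proof (rule field_differentiable_bound[where f'="\<lambda>w. deriv f w - a"])
  show "convex (cball (0::complex) \<rho>)" by simp
  show "((\<lambda>w. f w - a * w) has_field_derivative deriv f z - a) (at z within cball 0 \<rho>)"
    if "z \<in> cball 0 \<rho>" for z
  proof -
    have "norm z < 1" using that rho by auto
    then show ?thesis
    proof -
      have d: "(f has_field_derivative deriv f z) (at z within cball 0 \<rho>)"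
        by (rule has_field_derivative_at_within[OF f_deriv[OF \<open>norm z < 1\<close>]])
      have e: "((\<lambda>w. a * w) has_field_derivative a) (at z within cball 0 \<rho>)"
        using DERIV_cmult_Id[of a z "cball 0 \<rho>"] by (simp add: fun_eq_iff)
      show ?thesis using DERIV_diff[OF d e] .
    qed
  qed
qed (use df assms in auto)

lemma lower:
  assumes "x \<in> cball 0 \<rho>" "y \<in> cball 0 \<rho>"
  shows "norm a / 2 * norm (x - y) \<le> norm (f x - f y)"
proof -
  have "norm (a * (x - y)) - norm (f x - f y) \<le> norm ((f x - a * x) - (f y - a * y))"
    using norm_triangle_ineq3[of "a * (x - y)" "f x - f y"]
    by (simp add: algebra_simps norm_minus_commute)
  then show ?thesis using lin[OF assms] by (simp add: norm_mult)
qed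

lemma small:
  assumes "w \<in> cball 0 \<rho>"
  shows "norm w \<le> 2 * norm (f w) / norm a"
proof -
  have "norm a / 2 * norm w \<le> norm (f w)" using lower[OF assms, of 0] rho f0 by simp
  then show ?thesis using anz by (simp add: field_simps)
qed

lemma inj: "inj_on f (cball 0 \<rho>)"
proof (rule inj_onI)
  fix x y assume "x \<in> cball 0 \<rho>" "y \<in> cball 0 \<rho>" "f x = f y"
  then have "norm a / 2 * norm (x - y) \<le> 0" using lower by fastforce
  then show "x = y" using anz by (simp add: mult_le_0_iff)
qed

lemma surj:
  assumes z: "z \<in> ball 0 \<epsilon>"
  shows "\<exists>w\<in>cball 0 \<rho>. f w = z"
proof -
  define \<Phi> where "\<Phi> = (\<lambda>w. w - (f w - z) / a)"
  have lip: "dist (\<Phi> x) (\<Phi> y) \<le> 1/2 * dist x y" if "x \<in> cball 0 \<rho>" "y \<in> cball 0 \<rho>" for x y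
  proof -
    have "\<Phi> x - \<Phi> y = - (((f x - a * x) - (f y - a * y)) / a)"
      unfolding \<Phi>_def using anz by (simp add: field_simps)
    then have "norm (\<Phi> x - \<Phi> y) = norm ((f x - a * x) - (f y - a * y)) / norm a"
      by (simp add: norm_divide)
    also have "\<dots> \<le> (norm a / 2 * norm (x - y)) / norm a"
      using lin[OF that] by (intro divide_right_mono) auto
    finally show ?thesis using anz by (simp add: dist_norm)
  qed
  have into: "\<Phi> ` cball 0 \<rho> \<subseteq> cball 0 \<rho>"
  proof
    fix y assume "y \<in> \<Phi> ` cball 0 \<rho>"
    then obtain x where x: "x \<in> cball 0 \<rho>" and y: "y = \<Phi> x" by auto
    have "norm (\<Phi> x) \<le> norm (\<Phi> x - \<Phi> 0) + norm (\<Phi> 0)" by (metis norm_triangle_ineq diff_add_cancel)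
    also have "norm (\<Phi> x - \<Phi> 0) \<le> 1/2 * norm x" using lip[OF x, of 0] rho by (simp add: dist_norm)
    also have "\<Phi> 0 = z / a" unfolding \<Phi>_def by (simp add: f0)
    also have "norm (z / a) \<le> \<rho> / 4"
    proof -
      have "norm z \<le> \<rho> * norm a / 4" using z eps by simp
      then show ?thesis using anz by (simp add: norm_divide field_simps)
    qed
    finally have "norm (\<Phi> x) \<le> \<rho>" using x rho by simp
    then show "y \<in> cball 0 \<rho>" using y by simp
  qed
  obtain w where w: "w \<in> cball 0 \<rho>" "\<Phi> w = w"
    using Banach_fix[of "cball 0 \<rho>" "1/2" \<Phi>] into lip rho
    by (auto simp: complete_eq_closed)
  then have "f w = z" unfolding \<Phi>_def using anz by (simp add: field_simps)
  with w show ?thesis by blast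
qed

lemma g_props:
  assumes z: "z \<in> ball 0 \<epsilon>"
  shows "g z \<in> ball 0 \<rho>" "f (g z) = z" "norm (g z) \<le> 2 * norm z / norm a"
proof -
  obtain w where w: "w \<in> cball 0 \<rho>" "f w = z" using surj[OF z] by blast
  have "norm w \<le> 2 * norm z / norm a" using small[OF w(1)] w(2) by simp
  also have "\<dots> \<le> 2 * (\<rho> * norm a / 4) / norm a"
    using z eps anz by (intro divide_right_mono mult_left_mono) auto
  also have "\<dots> = \<rho> / 2" using anz by simp
  finally have wb: "w \<in> ball 0 \<rho>" using rho by simp
  then have zi: "z \<in> f ` ball 0 \<rho>" using w by auto
  show "g z \<in> ball 0 \<rho>" unfolding g_def by (rule inv_into_into[OF zi])
  show fz: "f (g z) = z" unfolding g_def by (rule f_inv_into_f[OF zi])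
  have "g z \<in> cball 0 \<rho>" using \<open>g z \<in> ball 0 \<rho>\<close> by auto
  from small[OF this] show "norm (g z) \<le> 2 * norm z / norm a" using fz by simp
qed

lemma g_f: "w \<in> ball 0 \<rho> \<Longrightarrow> g (f w) = w"
  unfolding g_def by (rule inv_into_f_f) (use inj inj_on_subset[OF inj, of "ball 0 \<rho>"] in auto)

lemma df_nz: "w \<in> cball 0 \<rho> \<Longrightarrow> deriv f w \<noteq> 0"
  using df anz by force

lemma g_deriv:
  assumes z: "z \<in> ball 0 \<epsilon>"
  shows "(g has_field_derivative inverse (deriv f (g z))) (at z)"
proof -
  have gz: "g z \<in> ball 0 \<rho>" "f (g z) = z" using g_props[OF z] by auto
  have "(g has_field_derivative inverse (deriv f (g z))) (at (f (g z)))"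
  proof (rule has_field_derivative_inverse_strong[where S="ball 0 \<rho>" and f=f and x="g z"])
    show "(f has_field_derivative deriv f (g z)) (at (g z))" using gz rho by (intro f_deriv) auto
    show "deriv f (g z) \<noteq> 0" using gz by (intro df_nz) auto
    show "continuous_on (ball 0 \<rho>) f"
      using holomorphic_on_imp_continuous_on[OF holo] cb_sub ball_subset_cball
      by (blast intro: continuous_on_subset)
  qed (use gz g_f in auto)
  then show ?thesis using gz by simp
qed

lemma g_holo: "g holomorphic_on ball 0 \<epsilon>"
  unfolding holomorphic_on_def field_differentiable_def
  using g_deriv has_field_derivative_at_within by fastforce

lemma g0: "g 0 = 0"
  using g_f[of 0] rho f0 by simp

lemma dg0: "deriv g 0 = inverse a"
proof -
  have "(g has_field_derivative inverse (deriv f (g 0))) (at 0)" by (rule g_deriv) (use eps in simp)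
  then show ?thesis by (simp add: DERIV_imp_deriv g0 df0)
qed

lemma uniq:
  assumes ec: "continuous_on (ball 0 \<epsilon>) \<eta>" and e0: "\<eta> 0 = 0"
    and ef: "\<And>z. z \<in> ball 0 \<epsilon> \<Longrightarrow> f (\<eta> z) = z"
  shows "\<And>z. z \<in> ball 0 \<epsilon> \<Longrightarrow> \<eta> z = g z"
proof -
  define U where "U = ball 0 \<epsilon> \<inter> \<eta> -` ball 0 \<rho>"
  have op: "openin (top_of_set (ball 0 \<epsilon>)) U"
    unfolding U_def by (rule continuous_openin_preimage_gen[OF ec]) simp
  have U_eq: "U = {z \<in> ball 0 \<epsilon>. (\<lambda>z. \<eta> z - g z) z = 0}"
  proof (intro set_eqI iffI)
    fix z assume "z \<in> U"
    then have "z \<in> ball 0 \<epsilon>" "\<eta> z \<in> ball 0 \<rho>" by (simp_all add: U_def)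
    then have "g (f (\<eta> z)) = \<eta> z" by (intro g_f)
    then show "z \<in> {z \<in> ball 0 \<epsilon>. (\<lambda>z. \<eta> z - g z) z = 0}" using ef[OF \<open>z \<in> ball 0 \<epsilon>\<close>] \<open>z \<in> ball 0 \<epsilon>\<close> by simp
  next
    fix z assume "z \<in> {z \<in> ball 0 \<epsilon>. (\<lambda>z. \<eta> z - g z) z = 0}"
    then have "z \<in> ball 0 \<epsilon>" "\<eta> z = g z" by auto
    then show "z \<in> U" using g_props(1)[of z] by (simp add: U_def)
  qed
  have cl: "closedin (top_of_set (ball 0 \<epsilon>)) U"
    unfolding U_eq
    by (rule continuous_closedin_preimage_constant)
       (rule continuous_on_diff[OF ec holomorphic_on_imp_continuous_on[OF g_holo]])
  have "0 \<in> U" using e0 eps rho by (simp add: U_def)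
  then have "U = ball 0 \<epsilon>"
    using connected_clopen[of "ball (0::complex) \<epsilon>"] op cl connected_ball by blast
  show "\<eta> z = g z" if z: "z \<in> ball 0 \<epsilon>" for z
  proof -
    have "z \<in> U" using z \<open>U = ball 0 \<epsilon>\<close> by simp
    then have "\<eta> z - g z = 0" unfolding U_eq by simp
    then show ?thesis by simp
  qed
qed

definition Sg where "Sg = (\<lambda>z. (1 + z) * (if z = 0 then inverse a else g z / z))"

lemma Sg_holo: "Sg holomorphic_on ball 0 \<epsilon>"
proof -
  have "(\<lambda>z. if z = 0 then deriv g 0 else (g z - g 0) / (z - 0)) holomorphic_on ball 0 \<epsilon>"
    by (rule pole_lemma[OF g_holo]) (use eps in simp)
  moreover have "(\<lambda>z. if z = 0 then deriv g 0 else (g z - g 0) / (z - 0)) = (\<lambda>z. if z = 0 then inverse a else g z / z)"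
    by (rule ext) (simp add: dg0 g0)
  ultimately have "(\<lambda>z. if z = 0 then inverse a else g z / z) holomorphic_on ball 0 \<epsilon>"
    by simp
  then show ?thesis unfolding Sg_def by (intro holomorphic_intros)
qed

lemma one_plus_nz: "(z::complex) \<in> ball 0 \<epsilon> \<Longrightarrow> 1 + z \<noteq> 0"
proof
  assume "z \<in> ball 0 \<epsilon>" "1 + z = 0"
  then have "z = -1" by (simp add: add_eq_0_iff)
  with \<open>z \<in> ball 0 \<epsilon>\<close> eps show False by simp
qed

lemma Sg_eta: "z \<in> ball 0 \<epsilon> \<Longrightarrow> z * Sg z / (1 + z) = g z"
  using one_plus_nz[of z] g0 by (auto simp: Sg_def)

lemma Sg_prop: "z \<in> ball 0 \<epsilon> \<Longrightarrow> f (z * Sg z / (1 + z)) = z"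
  using Sg_eta g_props(2) by simp

lemma Sg_uniq:
  assumes Sh: "S holomorphic_on ball 0 \<epsilon>" and Sp: "\<And>z. z \<in> ball 0 \<epsilon> \<Longrightarrow> f (z * S z / (1 + z)) = z"
  shows "\<And>z. z \<in> ball 0 \<epsilon> \<Longrightarrow> S z = Sg z"
proof -
  have Sc: "continuous_on (ball 0 \<epsilon>) S" by (rule holomorphic_on_imp_continuous_on[OF Sh])
  have eta: "z * S z / (1 + z) = g z" if "z \<in> ball 0 \<epsilon>" for z
  proof (rule uniq[OF _ _ Sp that])
    show "continuous_on (ball 0 \<epsilon>) (\<lambda>z. z * S z / (1 + z))"
      by (intro continuous_intros Sc) (use one_plus_nz in auto)
  qed simp
  have ne: "S z = Sg z" if "z \<in> ball 0 \<epsilon>" "z \<noteq> 0" for z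
  proof -
    have "z * S z / (1 + z) = z * Sg z / (1 + z)" using eta[OF that(1)] Sg_eta[OF that(1)] by simp
    then show ?thesis using that one_plus_nz[OF that(1)] by (simp add: field_simps)
  qed
  have Sgc: "continuous_on (ball 0 \<epsilon>) Sg" by (rule holomorphic_on_imp_continuous_on[OF Sg_holo])
  have z0: "S 0 = Sg 0"
  proof -
    have b0: "(0::complex) \<in> ball 0 \<epsilon>" using eps by simp
    have l1: "(S \<longlongrightarrow> S 0) (at 0)" using Sc b0 by (simp add: continuous_on_eq_continuous_at isCont_def)
    have l2: "(Sg \<longlongrightarrow> Sg 0) (at 0)" using Sgc b0 by (simp add: continuous_on_eq_continuous_at isCont_def)
    have ev: "eventually (\<lambda>z. Sg z = S z) (at (0::complex))"
      unfolding eventually_at using eps by (intro exI[of _ \<epsilon>]) (auto simp: ne dist_norm)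
    have "(S \<longlongrightarrow> Sg 0) (at 0)" using tendsto_cong[OF ev] l2 by simp
    then show ?thesis using l1 tendsto_unique[OF at_neq_bot] by blast
  qed
  show "\<And>z. z \<in> ball 0 \<epsilon> \<Longrightarrow> S z = Sg z" using ne z0 by (case_tac "z = 0") auto
qed

end

context fj begin

lemma M2_bd: assumes t: "t \<ge> 0" and w: "norm w \<le> 1/4"
  shows "norm (deriv (deriv (mgf m t)) w) \<le> 64"
proof -
  have "norm (deriv (deriv (mgf m t)) w) \<le> 2 * 2 / (1/2 - 1/4)^2"
  proof (rule cauchy_d2[OF M_holo[OF t]])
    show "norm (mgf m t v) \<le> 2" if "norm v \<le> 1/2" for v
    proof -
      have "norm (mgf m t v) \<le> 1 / (1 - norm v)" using M_bd[OF t] that by simp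
      also have "\<dots> \<le> 2" using that by (simp add: field_simps)
      finally show ?thesis .
    qed
  qed (use w in auto)
  then show ?thesis by (simp add: power2_eq_square)
qed

lemma Md_close: assumes t: "t \<ge> 0" and w: "norm w \<le> 1/4"
  shows "norm (deriv (mgf m t) w - of_real (m 1 t)) \<le> 64 * norm w"
proof -
  have "norm (deriv (mgf m t) w - deriv (mgf m t) 0) \<le> 64 * norm (w - 0)"
  proof (rule field_differentiable_bound[where S="cball 0 (1/4)" and f'="deriv (deriv (mgf m t))"])
    show "(deriv (mgf m t) has_field_derivative deriv (deriv (mgf m t)) v) (at v within cball 0 (1/4))"
      if "v \<in> cball 0 (1/4)" for v
    proof -
      have "v \<in> ball 0 1" using that by auto
      then show ?thesis
        using holomorphic_derivI[OF holomorphic_deriv[OF M_holo[OF t]], of v] by simp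
    qed
    show "norm (deriv (deriv (mgf m t)) v) \<le> 64" if "v \<in> cball 0 (1/4)" for v
      using M2_bd[OF t] that by simp
  qed (use w in auto)
  then show ?thesis using M_d0[OF t] by simp
qed

lemma deriv_f: "t \<ge> 0 \<Longrightarrow> norm w < 1 \<Longrightarrow> deriv (\<lambda>w. mgf m t w - 1) w = deriv (mgf m t) w"
proof -
  assume a: "t \<ge> 0" "norm w < 1"
  have "((\<lambda>w. mgf m t w - 1) has_field_derivative deriv (mgf m t) w - 0) (at w)"
    by (intro DERIV_diff M_deriv[OF a] DERIV_const)
  then show ?thesis by (simp add: DERIV_imp_deriv)
qed

lemma invc_at:
  assumes t: "t \<ge> 0" and rho: "0 < \<rho>" "\<rho> \<le> 1/4" "64 * \<rho> \<le> \<bar>m 1 t\<bar> / 2"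
    and nz: "m 1 t \<noteq> 0" and eps: "0 < \<epsilon>" "\<epsilon> \<le> \<rho> * \<bar>m 1 t\<bar> / 4" "\<epsilon> \<le> 1/2"
  shows "invc (\<lambda>w. mgf m t w - 1) (of_real (m 1 t)) \<rho> \<epsilon>"
proof
  show "(\<lambda>w. mgf m t w - 1) holomorphic_on ball 0 1" by (intro holomorphic_intros M_holo t)
  show "mgf m t 0 - 1 = 0" by (simp add: M_0 t)
  show "deriv (\<lambda>w. mgf m t w - 1) 0 = of_real (m 1 t)" by (simp add: deriv_f t M_d0)
  show "\<forall>w\<in>cball 0 \<rho>. norm (deriv (\<lambda>w. mgf m t w - 1) w - of_real (m 1 t)) \<le> norm (complex_of_real (m 1 t)) / 2"
  proof
    fix w :: complex assume w: "w \<in> cball 0 \<rho>"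
    then have w1: "norm w \<le> 1/4" "norm w < 1" using rho by auto
    have "norm (deriv (\<lambda>w. mgf m t w - 1) w - of_real (m 1 t)) \<le> 64 * norm w"
      using Md_close[OF t w1(1)] deriv_f[OF t w1(2)] by simp
    also have "\<dots> \<le> 64 * \<rho>" using w by simp
    finally show "norm (deriv (\<lambda>w. mgf m t w - 1) w - of_real (m 1 t)) \<le> norm (complex_of_real (m 1 t)) / 2"
      using rho by simp
  qed
qed (use rho nz eps in auto)


lemma g_tderiv:
  assumes t: "t \<ge> 0" and d: "d > 0" and dl: "\<delta> > 0" and rho: "\<rho> \<le> 1/4"
    and inv: "\<And>s. s \<ge> 0 \<Longrightarrow> \<bar>s - t\<bar> < d \<Longrightarrow> invc (\<lambda>w. mgf m s w - 1) (of_real (m 1 s)) \<rho> \<epsilon> \<and> \<delta> \<le> \<bar>m 1 s\<bar>"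
    and z: "z \<in> ball 0 \<epsilon>"
  shows "((\<lambda>s. invc.g (\<lambda>w. mgf m s w - 1) \<rho> z) has_vector_derivative
           (- F t (invc.g (\<lambda>w. mgf m t w - 1) \<rho> z) / deriv (mgf m t) (invc.g (\<lambda>w. mgf m t w - 1) \<rho> z)))
         (at t within {0..})"
proof -
  define gs where "gs = (\<lambda>s. invc.g (\<lambda>w. mgf m s w - 1) \<rho> z)"
  obtain K where K: "\<And>t s w. t \<ge> 0 \<Longrightarrow> s \<ge> 0 \<Longrightarrow> norm w \<le> 1/4 \<Longrightarrow> norm (mgf m s w - mgf m t w) \<le> K * \<bar>s - t\<bar>"
    using M_lip[of "1/4"] by auto
  obtain L where L: "\<And>t s w. t \<ge> 0 \<Longrightarrow> s \<ge> 0 \<Longrightarrow> norm w \<le> 1/4 \<Longrightarrow>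
     norm (mgf m s w - mgf m t w - of_real (s - t) * F t w) \<le> L * (s - t)^2"
    using M_second[of "1/4"] by auto
  have invt: "invc (\<lambda>w. mgf m t w - 1) (of_real (m 1 t)) \<rho> \<epsilon>" "\<delta> \<le> \<bar>m 1 t\<bar>" using inv[of t] t d by auto
  interpret I: invc "\<lambda>w. mgf m t w - 1" "of_real (m 1 t)" \<rho> \<epsilon> by (rule invt(1))
  have ws: "gs s \<in> ball 0 \<rho> \<and> mgf m s (gs s) - 1 = z" if "s \<ge> 0" "\<bar>s - t\<bar> < d" for s
    using invc.g_props(1,2)[OF conjunct1[OF inv[OF that]] z] by (simp add: gs_def)
  have wt: "gs t \<in> ball 0 \<rho>" "mgf m t (gs t) - 1 = z" using ws[of t] t d by auto
  have gI: "gs t = I.g z" by (simp add: gs_def)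
  have wsmall: "norm (gs s) \<le> 1/4" if "s \<ge> 0" "\<bar>s - t\<bar> < d" for s
    using ws[OF that] rho by auto
  have lip: "norm (gs s - gs t) \<le> (2 * K / \<delta>) * \<bar>s - t\<bar>" if s: "s \<ge> 0" "\<bar>s - t\<bar> < d" for s
  proof -
    have a: "norm (complex_of_real (m 1 t)) / 2 * norm (gs s - gs t)
        \<le> norm ((mgf m t (gs s) - 1) - (mgf m t (gs t) - 1))"
      by (rule I.lower) (use ws[OF s] wt in auto)
    have "(mgf m t (gs s) - 1) - (mgf m t (gs t) - 1) = mgf m t (gs s) - mgf m s (gs s)"
      using ws[OF s] wt by (simp add: algebra_simps)
    also have "norm \<dots> \<le> K * \<bar>t - s\<bar>" by (rule K[OF s(1) t wsmall[OF s]])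
    finally have b: "\<bar>m 1 t\<bar> / 2 * norm (gs s - gs t) \<le> K * \<bar>s - t\<bar>" using a by (simp add: abs_minus_commute)
    have "\<delta> / 2 * norm (gs s - gs t) \<le> \<bar>m 1 t\<bar> / 2 * norm (gs s - gs t)"
      using invt(2) by (intro mult_right_mono) auto
    then have "\<delta> / 2 * norm (gs s - gs t) \<le> K * \<bar>s - t\<bar>" using b by linarith
    then show ?thesis using dl by (simp add: field_simps)
  qed
  have evd: "eventually (\<lambda>s. s \<ge> 0 \<and> \<bar>s - t\<bar> < d) (at t within {0..})"
    unfolding eventually_at using d by (intro exI[of _ d]) (auto simp: dist_real_def)
  have gs_lim: "(gs \<longlongrightarrow> gs t) (at t within {0..})"
  proof -
    have "((\<lambda>s. gs s - gs t) \<longlongrightarrow> 0) (at t within {0..})"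
    proof (rule Lim_null_comparison)
      show "eventually (\<lambda>s. norm (gs s - gs t) \<le> (2 * K / \<delta>) * \<bar>s - t\<bar>) (at t within {0..})"
        using evd by eventually_elim (use lip in auto)
      show "((\<lambda>s. (2 * K / \<delta>) * \<bar>s - t\<bar>) \<longlongrightarrow> 0) (at t within {0..})"
        by (rule tendsto_eq_intros refl)+ simp
    qed
    then show ?thesis by (simp add: LIM_zero_iff)
  qed
  define h where "h = (\<lambda>s. mgf m t (gs s) - 1)"
  have ht: "h t = z" using wt by (simp add: h_def)
  have w1: "gs t \<in> ball 0 1" using wt rho by auto
  have Fc: "isCont (F t) (gs t)"
    using holomorphic_on_imp_continuous_on[OF F_holo[OF t]] w1
    by (simp add: continuous_on_eq_continuous_at)
  have h_der: "(h has_vector_derivative - F t (gs t)) (at t within {0..})"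
  proof (rule vd_from_bound[where \<phi>="\<lambda>s. L * \<bar>s - t\<bar> + norm (F t (gs s) - F t (gs t))"])
    show "eventually (\<lambda>s. norm (h s - h t - (s - t) *\<^sub>R - F t (gs t))
        \<le> \<bar>s - t\<bar> * (L * \<bar>s - t\<bar> + norm (F t (gs s) - F t (gs t)))) (at t within {0..})"
      using evd
    proof eventually_elim
      case (elim s)
      then have s: "s \<ge> 0" "\<bar>s - t\<bar> < d" by auto
      have e: "h s - h t - (s - t) *\<^sub>R - F t (gs t)
        = - (mgf m s (gs s) - mgf m t (gs s) - of_real (s - t) * F t (gs s))
          - of_real (s - t) * (F t (gs s) - F t (gs t))"
        using ws[OF s] ht unfolding h_def scaleR_conv_of_real by (simp add: algebra_simps)
      have "norm (h s - h t - (s - t) *\<^sub>R - F t (gs t))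
          \<le> norm (mgf m s (gs s) - mgf m t (gs s) - of_real (s - t) * F t (gs s))
            + norm (of_real (s - t) * (F t (gs s) - F t (gs t)))"
        unfolding e by (metis norm_minus_cancel norm_triangle_ineq4)
      also have "\<dots> \<le> L * (s - t)^2 + \<bar>s - t\<bar> * norm (F t (gs s) - F t (gs t))"
        by (intro add_mono L[OF t s(1) wsmall[OF s]]) (simp only: norm_mult norm_of_real order_refl)
      also have "\<dots> = \<bar>s - t\<bar> * (L * \<bar>s - t\<bar> + norm (F t (gs s) - F t (gs t)))"
        by (simp add: algebra_simps power2_eq_square abs_mult_self_eq)
      finally show ?case .
    qed
    have "((\<lambda>s. F t (gs s)) \<longlongrightarrow> F t (gs t)) (at t within {0..})"
      by (rule isCont_tendsto_compose[OF Fc gs_lim])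
    then have "((\<lambda>s. norm (F t (gs s) - F t (gs t))) \<longlongrightarrow> 0) (at t within {0..})"
      by (intro tendsto_norm_zero) (simp add: LIM_zero)
    moreover have "((\<lambda>s. L * \<bar>s - t\<bar>) \<longlongrightarrow> 0) (at t within {0..})"
      by (rule tendsto_eq_intros refl)+ simp
    ultimately show "((\<lambda>s. L * \<bar>s - t\<bar> + norm (F t (gs s) - F t (gs t))) \<longlongrightarrow> 0) (at t within {0..})"
      using tendsto_add by fastforce
  qed
  have gder: "(I.g has_field_derivative inverse (deriv (\<lambda>w. mgf m t w - 1) (I.g z))) (at (h t) within h ` {0..})"
    unfolding ht by (rule has_field_derivative_at_within[OF I.g_deriv[OF z]])
  have comp: "((I.g \<circ> h) has_vector_derivative (- F t (gs t)) * inverse (deriv (\<lambda>w. mgf m t w - 1) (I.g z)))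
      (at t within {0..})"
    by (rule field_vector_diff_chain_within[OF h_der gder])
  have "(gs has_vector_derivative (- F t (gs t)) * inverse (deriv (\<lambda>w. mgf m t w - 1) (I.g z)))
      (at t within {0..})"
  proof (rule has_vector_derivative_transform_within[OF comp d])
    show "t \<in> {0..}" using t by simp
    show "(I.g \<circ> h) s = gs s" if "s \<in> {0..}" "dist s t < d" for s
    proof -
      have "s \<ge> 0" "\<bar>s - t\<bar> < d" using that by (auto simp: dist_real_def)
      then have "gs s \<in> ball 0 \<rho>" using ws by auto
      then show ?thesis unfolding h_def o_def by (rule I.g_f)
    qed
  qed
  moreover have "deriv (\<lambda>w. mgf m t w - 1) (I.g z) = deriv (mgf m t) (gs t)"
    using deriv_f[OF t] w1 gI by simp
  ultimately show ?thesis unfolding gs_def[symmetric] using gI by (simp add: divide_inverse)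
qed

end

lemma alg:
  fixes z w p l t :: complex
  assumes z: "z \<noteq> 0" and p: "p \<noteq> 0"
  shows "(1 + z) * ((- (- w * ((- (t*(1-l))) * (1+z) + ((1 - 2*l*t) - t*(1-l)*w) * p
        + (- (l*t)) * (1+z)^2 + (l*t) * (1-w) * (2*(1+z)*p))) / p) / z)
     = (2*(l*t)*z+1) * ((1+z)*(w/z)) - t*(1+2*l*z) * ((1+z)*(w/z))^2
       - t*z*(1+l*z)/2 * (2 * ((1+z)*(w/z)) * (- w / z^2 + (1+z) / (z * p)))"
  using z p by (simp add: field_simps power2_eq_square)


context invc begin

lemma Sg_sq_deriv:
  assumes z: "z \<in> ball 0 \<epsilon>" and z0: "z \<noteq> 0"
  shows "deriv (\<lambda>v. (Sg v)^2) z
     = 2 * ((1+z)*(g z/z)) * (- g z / z^2 + (1+z) / (z * deriv f (g z)))"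
proof -
  have gz: "g z \<in> ball 0 \<rho>" using g_props(1)[OF z] .
  have pnz: "deriv f (g z) \<noteq> 0" using df_nz gz by auto
  have d1: "((\<lambda>v. ((1+v)*(g v/v))^2) has_field_derivative
      2 * ((1+z)*(g z/z)) * (- g z / z^2 + (1+z) / (z * deriv f (g z)))) (at z)"
  proof -
    have dg: "(g has_field_derivative inverse (deriv f (g z))) (at z)" by (rule g_deriv[OF z])
    have dq: "((\<lambda>v. g v / v) has_field_derivative (inverse (deriv f (g z)) * z - g z * 1) / (z * z)) (at z)"
      by (rule DERIV_divide[OF dg DERIV_ident z0])
    have d1: "((\<lambda>v. 1 + v) has_field_derivative 0 + 1) (at z)"
      by (rule DERIV_add[OF DERIV_const DERIV_ident])
    have dm: "((\<lambda>v. (1+v) * (g v / v)) has_field_derivative (1 + z) * ((inverse (deriv f (g z)) * z - g z * 1) / (z * z)) + (0 + 1) * (g z / z)) (at z)"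
      by (rule DERIV_mult'[OF d1 dq])
    have dp: "((\<lambda>v. ((1+v) * (g v / v))^2) has_field_derivative of_nat 2 * (((1 + z) * ((inverse (deriv f (g z)) * z - g z * 1) / (z * z)) + (0 + 1) * (g z / z)) * ((1+z) * (g z / z))^(2 - Suc 0))) (at z)"
      by (rule DERIV_power[OF dm])
    have e: "of_nat 2 * (((1 + z) * ((inverse (deriv f (g z)) * z - g z * 1) / (z * z)) + (0 + 1) * (g z / z)) * ((1+z) * (g z / z))^(2 - Suc 0))
        = 2 * ((1+z)*(g z/z)) * (- g z / z^2 + (1+z) / (z * deriv f (g z)))"
      using z0 pnz by (simp add: field_simps power2_eq_square)
    show ?thesis using dp unfolding e .
  qed
  have "((\<lambda>v. (Sg v)^2) has_field_derivative
      2 * ((1+z)*(g z/z)) * (- g z / z^2 + (1+z) / (z * deriv f (g z)))) (at z)"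
  proof (rule has_field_derivative_transform_within_open[OF d1, where S="ball 0 \<epsilon> - {0}"])
    show "open (ball 0 \<epsilon> - {0::complex})" by auto
    show "z \<in> ball 0 \<epsilon> - {0}" using z z0 by auto
    show "((1+v)*(g v/v))^2 = (Sg v)^2" if "v \<in> ball 0 \<epsilon> - {0}" for v
      using that by (simp add: Sg_def)
  qed
  then show ?thesis by (rule DERIV_imp_deriv)
qed

end

context fj begin

lemma Sg_tderiv:
  assumes t: "t \<ge> 0" and d: "d > 0" and dl: "\<delta> > 0" and rho: "\<rho> \<le> 1/4"
    and inv: "\<And>s. s \<ge> 0 \<Longrightarrow> \<bar>s - t\<bar> < d \<Longrightarrow> invc (\<lambda>w. mgf m s w - 1) (of_real (m 1 s)) \<rho> \<epsilon> \<and> \<delta> \<le> \<bar>m 1 s\<bar>"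
    and z: "z \<in> ball 0 \<epsilon>"
  shows "((\<lambda>s. invc.Sg (\<lambda>w. mgf m s w - 1) (of_real (m 1 s)) \<rho> z) has_vector_derivative
       ((2 * complex_of_real (lam*th) * z + 1) * invc.Sg (\<lambda>w. mgf m t w - 1) (of_real (m 1 t)) \<rho> z
        - complex_of_real th * (1 + 2 * complex_of_real lam * z) * (invc.Sg (\<lambda>w. mgf m t w - 1) (of_real (m 1 t)) \<rho> z)^2
        - complex_of_real th * z * (1 + complex_of_real lam * z) / 2
           * deriv (\<lambda>w. (invc.Sg (\<lambda>w. mgf m t w - 1) (of_real (m 1 t)) \<rho> w)^2) z)) (at t within {0..})"
proof -
  have invt: "invc (\<lambda>w. mgf m t w - 1) (of_real (m 1 t)) \<rho> \<epsilon>" "\<delta> \<le> \<bar>m 1 t\<bar>" using inv[of t] t d by auto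
  interpret I: invc "\<lambda>w. mgf m t w - 1" "of_real (m 1 t)" \<rho> \<epsilon> by (rule invt(1))
  have a0: "m 1 t \<noteq> 0" using invt(2) dl by auto
  have Sdef: "invc.Sg (\<lambda>w. mgf m s w - 1) (of_real (m 1 s)) \<rho> v
      = (1 + v) * (if v = 0 then inverse (of_real (m 1 s)) else invc.g (\<lambda>w. mgf m s w - 1) \<rho> v / v)"
    if "s \<ge> 0" "\<bar>s - t\<bar> < d" for s v
    using invc.Sg_def[OF conjunct1[OF inv[OF that]]] by simp
  show ?thesis
  proof (cases "z = 0")
    case True
    have dm: "((\<lambda>s. complex_of_real (m 1 s)) has_vector_derivative of_real (th - m 1 t)) (at t within {0..})"
      by (rule m1_deriv[OF t])
    have di: "(inverse has_field_derivative - (inverse (complex_of_real (m 1 t)) ^ Suc (Suc 0)))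
        (at (complex_of_real (m 1 t)) within (\<lambda>s. complex_of_real (m 1 s)) ` {0..})"
      by (rule DERIV_inverse) (use a0 in simp)
    have c: "((inverse \<circ> (\<lambda>s. complex_of_real (m 1 s))) has_vector_derivative
        of_real (th - m 1 t) * - (inverse (complex_of_real (m 1 t)) ^ Suc (Suc 0))) (at t within {0..})"
      by (rule field_vector_diff_chain_within[OF dm di])
    have c2: "((\<lambda>s. invc.Sg (\<lambda>w. mgf m s w - 1) (of_real (m 1 s)) \<rho> z) has_vector_derivative
        of_real (th - m 1 t) * - (inverse (complex_of_real (m 1 t)) ^ Suc (Suc 0))) (at t within {0..})"
    proof (rule has_vector_derivative_transform_within[OF c d])
      show "t \<in> {0..}" using t by simp
      show "(inverse \<circ> (\<lambda>s. complex_of_real (m 1 s))) s = invc.Sg (\<lambda>w. mgf m s w - 1) (of_real (m 1 s)) \<rho> z"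
        if "s \<in> {0..}" "dist s t < d" for s
        using Sdef[of s z] that True by (simp add: dist_real_def)
    qed
    have "of_real (th - m 1 t) * - (inverse (complex_of_real (m 1 t)) ^ Suc (Suc 0))
       = (2 * complex_of_real (lam*th) * z + 1) * invc.Sg (\<lambda>w. mgf m t w - 1) (of_real (m 1 t)) \<rho> z
        - complex_of_real th * (1 + 2 * complex_of_real lam * z) * (invc.Sg (\<lambda>w. mgf m t w - 1) (of_real (m 1 t)) \<rho> z)^2
        - complex_of_real th * z * (1 + complex_of_real lam * z) / 2
           * deriv (\<lambda>w. (invc.Sg (\<lambda>w. mgf m t w - 1) (of_real (m 1 t)) \<rho> w)^2) z"
    proof -
      have S0: "invc.Sg (\<lambda>w. mgf m t w - 1) (of_real (m 1 t)) \<rho> 0 = inverse (of_real (m 1 t))"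
        using Sdef[of t 0] t d by simp
      show ?thesis unfolding True S0 using a0 by (simp add: field_simps power2_eq_square)
    qed
    then show ?thesis using c2 by simp
  next
    case False
    define w where "w = I.g z"
    define p where "p = deriv (mgf m t) w"
    have gd: "((\<lambda>s. invc.g (\<lambda>w. mgf m s w - 1) \<rho> z) has_vector_derivative (- F t w / p)) (at t within {0..})"
      unfolding w_def p_def by (rule g_tderiv[OF t d dl rho inv z]) auto
    have c: "((\<lambda>s. ((1 + z) / z) * invc.g (\<lambda>w. mgf m s w - 1) \<rho> z) has_vector_derivative ((1 + z) / z) * (- F t w / p)) (at t within {0..})"
      by (rule has_vector_derivative_mult_right[OF gd])
    have c2: "((\<lambda>s. invc.Sg (\<lambda>w. mgf m s w - 1) (of_real (m 1 s)) \<rho> z) has_vector_derivative ((1 + z) / z) * (- F t w / p)) (at t within {0..})"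
    proof (rule has_vector_derivative_transform_within[OF c d])
      show "t \<in> {0..}" using t by simp
      show "((1 + z) / z) * invc.g (\<lambda>w. mgf m s w - 1) \<rho> z = invc.Sg (\<lambda>w. mgf m s w - 1) (of_real (m 1 s)) \<rho> z"
        if "s \<in> {0..}" "dist s t < d" for s
        using Sdef[of s z] that False by (simp add: dist_real_def)
    qed
    have wb: "w \<in> ball 0 \<rho>" and fw: "mgf m t w - 1 = z" using I.g_props[OF z] by (auto simp: w_def)
    have w1: "norm w < 1" using wb I.rho by auto
    have pnz: "p \<noteq> 0" using I.df_nz[of w] wb deriv_f[OF t w1] by (auto simp: p_def)
    have Mw: "mgf m t w = 1 + z" using fw by (simp add: algebra_simps)
    have Fw: "F t w = - w * GD t w" using F_eq DERIV_imp_deriv[OF G_deriv[OF t w1]] by simp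
    have St: "invc.Sg (\<lambda>w. mgf m t w - 1) (of_real (m 1 t)) \<rho> z = (1 + z) * (w / z)"
      using Sdef[of t z] t d False by (simp add: w_def)
    have Dt: "deriv (\<lambda>v. (invc.Sg (\<lambda>w. mgf m t w - 1) (of_real (m 1 t)) \<rho> v)^2) z
        = 2 * ((1+z)*(w/z)) * (- w / z^2 + (1+z) / (z * p))"
      using I.Sg_sq_deriv[OF z False] deriv_f[OF t w1] by (simp add: w_def p_def)
    have "((1 + z) / z) * (- F t w / p) =
       ((2 * complex_of_real (lam*th) * z + 1) * invc.Sg (\<lambda>w. mgf m t w - 1) (of_real (m 1 t)) \<rho> z
        - complex_of_real th * (1 + 2 * complex_of_real lam * z) * (invc.Sg (\<lambda>w. mgf m t w - 1) (of_real (m 1 t)) \<rho> z)^2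
        - complex_of_real th * z * (1 + complex_of_real lam * z) / 2
           * deriv (\<lambda>w. (invc.Sg (\<lambda>w. mgf m t w - 1) (of_real (m 1 t)) \<rho> w)^2) z)"
    proof -
      have A: "(1 + z) * ((- (- w * ((- (of_real th * (1- of_real lam))) * (1+z) + ((1 - 2 * of_real lam * of_real th) - of_real th * (1- of_real lam) * w) * p
        + (- (of_real lam * of_real th)) * (1+z)^2 + (of_real lam * of_real th) * (1-w) * (2 * (1+z) * p))) / p) / z)
        = (2 * (of_real lam * of_real th) * z+1) * ((1+z) * (w/z)) - of_real th * (1+2 * of_real lam * z) * ((1+z) * (w/z))^2
       - of_real th * z * (1+ of_real lam * z)/2 * (2 * ((1+z) * (w/z)) * (- w / z^2 + (1+z) / (z * p)))"
        by (rule alg[OF False pnz])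
      show ?thesis unfolding St Dt Fw GD_def Mw p_def[symmetric]
        using False pnz by (simp add: field_simps power2_eq_square)
    qed
    then show ?thesis using c2 by simp
  qed
qed

end

theorem mainTheorem1:
  fixes lam th :: real and m :: "nat \<Rightarrow> real \<Rightarrow> real"
  assumes lam_pos: "lam > 0"
    and th_pos: "0 < th" and th_le: "th \<le> 1"
    and lamth_le: "lam * th \<le> 1"
    and m0: "\<forall>t\<ge>0. m 0 t = 1"
    and m_bound: "\<forall>n. \<forall>t\<ge>0. \<bar>m n t\<bar> \<le> 1"
    and m1_nz: "\<forall>t\<ge>0. m 1 t \<noteq> 0"
    and pde: "\<forall>t\<ge>0. \<forall>z\<in>ball 0 1.
               ((\<lambda>s. mgf m s z) has_vector_derivative jacobi_mgf_rhs lam th (mgf m t) z)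
                 (at t within {0..})"
  shows "\<forall>t0\<ge>0. \<exists>\<epsilon>>0.
           (\<exists>S. is_S_transform_on (mgf m) ({0..} \<inter> {t0-\<epsilon><..<t0+\<epsilon>}) \<epsilon> S) \<and>
           (\<forall>S. is_S_transform_on (mgf m) ({0..} \<inter> {t0-\<epsilon><..<t0+\<epsilon>}) \<epsilon> S \<longrightarrow>
              (\<forall>t\<in>{0..} \<inter> {t0-\<epsilon><..<t0+\<epsilon>}. \<forall>z\<in>ball 0 \<epsilon>.
                 ((\<lambda>s. S s z) has_vector_derivative
                    ((2 * complex_of_real (lam*th) * z + 1) * S t z
                     - complex_of_real th * (1 + 2 * complex_of_real lam * z) * (S t z)^2
                     - complex_of_real th * z * (1 + complex_of_real lam * z) / 2
                         * deriv (\<lambda>w. (S t w)^2) z))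
                 (at t within {0..})))"
proof -
  interpret fj lam th m using m0 m_bound pde by unfold_locales
  show ?thesis
  proof (intro allI impI)
    fix t0 :: real assume t0: "t0 \<ge> 0"
    define \<delta> where "\<delta> = \<bar>m 1 t0\<bar> / 2"
    have dl: "\<delta> > 0" using m1_nz t0 by (simp add: \<delta>_def)
    have dl2: "\<delta> \<le> 1/2" using m_bound t0 by (simp add: \<delta>_def)
    have "continuous (at t0 within {0..}) (\<lambda>s. complex_of_real (m 1 s))"
      by (rule has_vector_derivative_continuous[OF m1_deriv[OF t0]])
    then obtain \<epsilon>1 where e1: "\<epsilon>1 > 0"
      and e1b: "\<And>s. s \<in> {0..} \<Longrightarrow> dist s t0 < \<epsilon>1 \<Longrightarrow> dist (complex_of_real (m 1 s)) (complex_of_real (m 1 t0)) < \<delta>"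
      unfolding continuous_within_eps_delta using dl by blast
    have mlow: "\<delta> < \<bar>m 1 s\<bar>" if "s \<ge> 0" "\<bar>s - t0\<bar> < \<epsilon>1" for s
    proof -
      have "\<bar>m 1 s - m 1 t0\<bar> < \<delta>" using e1b[of s] that by (simp add: dist_real_def dist_norm flip: of_real_diff)
      then show ?thesis unfolding \<delta>_def by linarith
    qed
    define \<rho> where "\<rho> = min (1/4) (\<delta> / 128)"
    have rho: "0 < \<rho>" "\<rho> \<le> 1/4" "64 * \<rho> \<le> \<delta> / 2" using dl by (auto simp: \<rho>_def)
    define \<epsilon> where "\<epsilon> = min \<epsilon>1 (\<rho> * \<delta> / 4)"
    have eps: "0 < \<epsilon>" "\<epsilon> \<le> \<epsilon>1" "\<epsilon> \<le> \<rho> * \<delta> / 4" using e1 rho dl by (auto simp: \<epsilon>_def)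
    have eps2: "\<epsilon> \<le> 1/2"
    proof -
      have "\<rho> * \<delta> / 4 \<le> (1/4) * (1/2) / 4" using rho dl dl2 by (intro divide_right_mono mult_mono) auto
      then show ?thesis using eps by linarith
    qed
    define T where "T = {0..} \<inter> {t0-\<epsilon><..<t0+\<epsilon>}"
    have inv: "invc (\<lambda>w. mgf m s w - 1) (of_real (m 1 s)) \<rho> \<epsilon> \<and> \<delta> \<le> \<bar>m 1 s\<bar>" if "s \<in> T" for s
    proof -
      have s: "s \<ge> 0" "\<bar>s - t0\<bar> < \<epsilon>1" using that eps by (auto simp: T_def)
      have ml: "\<delta> < \<bar>m 1 s\<bar>" by (rule mlow[OF s])
      have "invc (\<lambda>w. mgf m s w - 1) (of_real (m 1 s)) \<rho> \<epsilon>"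
      proof (rule invc_at[OF s(1) rho(1,2) _ _ eps(1) _ eps2])
        show "64 * \<rho> \<le> \<bar>m 1 s\<bar> / 2" using rho ml by linarith
        show "m 1 s \<noteq> 0" using ml dl by auto
        have "\<rho> * \<delta> / 4 \<le> \<rho> * \<bar>m 1 s\<bar> / 4" using ml rho by (intro divide_right_mono mult_left_mono) auto
        then show "\<epsilon> \<le> \<rho> * \<bar>m 1 s\<bar> / 4" using eps by linarith
      qed
      then show ?thesis using ml by simp
    qed
    define Sm where "Sm = (\<lambda>s. invc.Sg (\<lambda>w. mgf m s w - 1) (of_real (m 1 s)) \<rho>)"
    have ex: "is_S_transform_on (mgf m) T \<epsilon> Sm"
      unfolding is_S_transform_on_def
    proof (intro ballI conjI)
      fix t assume "t \<in> T"
      then interpret I: invc "\<lambda>w. mgf m t w - 1" "of_real (m 1 t)" \<rho> \<epsilon> using inv by blast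
      show "Sm t holomorphic_on ball 0 \<epsilon>" unfolding Sm_def by (rule I.Sg_holo)
      fix z :: complex assume "z \<in> ball 0 \<epsilon>"
      then show "mgf m t (z * Sm t z / (1 + z)) - 1 = z" unfolding Sm_def using I.Sg_prop by simp
    qed
    have all: "((\<lambda>s. S s z) has_vector_derivative
                    ((2 * complex_of_real (lam*th) * z + 1) * S t z
                     - complex_of_real th * (1 + 2 * complex_of_real lam * z) * (S t z)^2
                     - complex_of_real th * z * (1 + complex_of_real lam * z) / 2
                         * deriv (\<lambda>w. (S t w)^2) z))
                 (at t within {0..})"
      if SS: "is_S_transform_on (mgf m) T \<epsilon> S" and t: "t \<in> T" and z: "z \<in> ball 0 \<epsilon>" for S t z
    proof -
      have eqS: "S s v = Sm s v" if "s \<in> T" "v \<in> ball 0 \<epsilon>" for s v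
      proof -
        interpret I: invc "\<lambda>w. mgf m s w - 1" "of_real (m 1 s)" \<rho> \<epsilon> using inv[OF that(1)] by blast
        show ?thesis unfolding Sm_def
          by (rule I.Sg_uniq[OF _ _ that(2)]) (use SS that(1) in \<open>auto simp: is_S_transform_on_def\<close>)
      qed
      define d where "d = min (t - (t0 - \<epsilon>)) ((t0 + \<epsilon>) - t)"
      have d: "d > 0" using t by (auto simp: d_def T_def)
      have dT: "s \<in> T" if "s \<ge> 0" "\<bar>s - t\<bar> < d" for s
        using that t by (auto simp: d_def T_def)
      have t0': "t \<ge> 0" using t by (simp add: T_def)
      have D: "((\<lambda>s. Sm s z) has_vector_derivative
                    ((2 * complex_of_real (lam*th) * z + 1) * Sm t z
                     - complex_of_real th * (1 + 2 * complex_of_real lam * z) * (Sm t z)^2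
                     - complex_of_real th * z * (1 + complex_of_real lam * z) / 2
                         * deriv (\<lambda>w. (Sm t w)^2) z))
                 (at t within {0..})"
        unfolding Sm_def by (rule Sg_tderiv[OF t0' d dl rho(2) _ z]) (use inv dT in blast)
      have D2: "((\<lambda>s. S s z) has_vector_derivative
                    ((2 * complex_of_real (lam*th) * z + 1) * Sm t z
                     - complex_of_real th * (1 + 2 * complex_of_real lam * z) * (Sm t z)^2
                     - complex_of_real th * z * (1 + complex_of_real lam * z) / 2
                         * deriv (\<lambda>w. (Sm t w)^2) z))
                 (at t within {0..})"
      proof (rule has_vector_derivative_transform_within[OF D d])
        show "t \<in> {0..}" using t0' by simp
        show "Sm s z = S s z" if "s \<in> {0..}" "dist s t < d" for s
          using eqS[OF dT z] that by (simp add: dist_real_def)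
      qed
      have e1: "S t z = Sm t z" by (rule eqS[OF t z])
      have e2: "deriv (\<lambda>w. (S t w)^2) z = deriv (\<lambda>w. (Sm t w)^2) z"
      proof (rule deriv_cong_ev)
        have "eventually (\<lambda>w. w \<in> ball 0 \<epsilon>) (nhds z)" using z by (intro eventually_nhds_in_open) auto
        then show "eventually (\<lambda>w. (S t w)^2 = (Sm t w)^2) (nhds z)"
          by eventually_elim (use eqS[OF t] in auto)
      qed simp
      show ?thesis unfolding e1 e2 by (rule D2)
    qed
    show "\<exists>\<epsilon>>0. (\<exists>S. is_S_transform_on (mgf m) ({0..} \<inter> {t0-\<epsilon><..<t0+\<epsilon>}) \<epsilon> S) \<and>
           (\<forall>S. is_S_transform_on (mgf m) ({0..} \<inter> {t0-\<epsilon><..<t0+\<epsilon>}) \<epsilon> S \<longrightarrow>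
              (\<forall>t\<in>{0..} \<inter> {t0-\<epsilon><..<t0+\<epsilon>}. \<forall>z\<in>ball 0 \<epsilon>.
                 ((\<lambda>s. S s z) has_vector_derivative
                    ((2 * complex_of_real (lam*th) * z + 1) * S t z
                     - complex_of_real th * (1 + 2 * complex_of_real lam * z) * (S t z)^2
                     - complex_of_real th * z * (1 + complex_of_real lam * z) / 2
                         * deriv (\<lambda>w. (S t w)^2) z))
                 (at t within {0..})))"
      using eps(1) ex all unfolding T_def by blast
  qed
qed

end
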